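(* Let $(t_k)_{k\in\mathbb{N}}$ be a strictly increasing sequence with $t_1=\pi/4$ and $t_k\to\pi/2$, let $v_k=(\cos t_k,\sin t_k)\in\mathbb{R}^2$, $a=(-2,2)$, $b=(2,2)$, and $C_1'=\{a\}$, $C_2'=\{b\}$, $C_3'=\overline{\mathrm{co}}\{v_k:k\in\mathbb{N}\}$. Let $k\in\mathbb{N}$ and $d_k=\frac{v_{k+1}-v_k}{\|v_{k+1}-v_k\|}$. Then for every point $c$ of the half-open segment $[v_k,v_{k+1})=\{(1-s)v_k+sv_{k+1}: s\in[0,1)\}$, the number $$\varepsilon(c)=1+\frac{\langle b-c,d_k\rangle}{\langle a-c,d_k\rangle}$$ is well defined and lies in $(0,1)$, and the triple $(a,b,c)$ is the support of an $\varepsilon(c)$-cycle $(u_1',u_2',u_3')$ for $C_1',C_2',C_3'$.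
   Context: For a nonempty closed convex set $C\subseteq\mathbb{R}^2$, $\Pi_C(u)$ denotes the Euclidean projection of $u$ onto $C$. For three nonempty closed convex sets $D_1,D_2,D_3$ and $\varepsilon\in(0,1]$, an $\varepsilon$-cycle is a triple $(u_1,u_2,u_3)$ with $u_1=u_3+\varepsilon(\Pi_{D_1}(u_3)-u_3)$, $u_2=u_1+\varepsilon(\Pi_{D_2}(u_1)-u_1)$, $u_3=u_2+\varepsilon(\Pi_{D_3}(u_2)-u_2)$; its support is the triple $(\Pi_{D_1}(u_3),\Pi_{D_2}(u_1),\Pi_{D_3}(u_2))$. $\overline{\mathrm{co}}$ denotes closed convex hull and $\langle\cdot,\cdot\rangle$ the Euclidean inner product. *)

theory Defs
  imports "HOL-Analysis.Analysis"
begin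

definition eps_cycle ::
  "(real \<times> real) set \<Rightarrow> (real \<times> real) set \<Rightarrow> (real \<times> real) set \<Rightarrow> real
    \<Rightarrow> (real \<times> real) \<Rightarrow> (real \<times> real) \<Rightarrow> (real \<times> real) \<Rightarrow> bool" where
  "eps_cycle D1 D2 D3 eps u1 u2 u3 \<longleftrightarrow>
     0 < eps \<and> eps \<le> 1 \<and>
     u1 = u3 + eps *\<^sub>R (closest_point D1 u3 - u3) \<and>
     u2 = u1 + eps *\<^sub>R (closest_point D2 u1 - u1) \<and>
     u3 = u2 + eps *\<^sub>R (closest_point D3 u2 - u2)"

definition cycle_support ::
  "(real \<times> real) set \<Rightarrow> (real \<times> real) set \<Rightarrow> (real \<times> real) set
    \<Rightarrow> (real \<times> real) \<Rightarrow> (real \<times> real) \<Rightarrow> (real \<times> real)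
    \<Rightarrow> (real \<times> real) \<times> (real \<times> real) \<times> (real \<times> real)" where
  "cycle_support D1 D2 D3 u1 u2 u3 =
     (closest_point D1 u3, closest_point D2 u1, closest_point D3 u2)"

end

theory Submission
  imports Defs
begin

lemma cp_char:
  fixes S :: "(real \<times> real) set"
  assumes "convex S" "closed S" "x \<in> S" "\<forall>y\<in>S. inner (u - x) (y - x) \<le> 0"
  shows "closest_point S u = x"
proof -
  have "\<forall>z\<in>S. dist u x \<le> dist u z"
  proof
    fix z assume z: "z \<in> S"
    have e: "u - z = (u - x) - (z - x)" by simp
    have eq: "inner (u - z) (u - z) = inner (u - x) (u - x) - 2 * inner (u - x) (z - x) + inner (z - x) (z - x)"
      unfolding e by (simp add: inner_diff_left inner_diff_right inner_commute)
    have "inner (u - x) (z - x) \<le> 0" using assms(4) z by blast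
    then have "inner (u - x) (u - x) \<le> inner (u - z) (u - z)"
      unfolding eq using inner_ge_zero[of "z - x"] by linarith
    then show "dist u x \<le> dist u z" by (simp add: dist_norm norm_le)
  qed
  then show ?thesis using closest_point_unique[OF assms(1-3)] by simp
qed

lemma t_facts:
  fixes t :: "nat \<Rightarrow> real"
  assumes mono: "strict_mono_on {1..} t"
    and t1: "t 1 = pi / 4"
    and lim: "t \<longlonglongrightarrow> pi / 2"
    and j: "j \<ge> 1"
  shows "pi/4 \<le> t j" "t j < pi/2"
proof -
  show "pi/4 \<le> t j"
  proof (cases "j = 1")
    case True then show ?thesis using t1 by simp
  next
    case False then have "t 1 < t j" using mono j unfolding strict_mono_on_def by auto
    then show ?thesis using t1 by simp
  qed
  have "t (j+1) \<le> pi/2"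
  proof (rule LIMSEQ_le_const[OF lim], rule exI[of _ "j+1"], intro allI impI)
    fix n assume "n \<ge> j+1"
    then show "t (j+1) \<le> t n"
      using mono unfolding strict_mono_on_def
      by (cases "n = j+1") (auto intro: less_imp_le)
  qed
  moreover have "t j < t (j+1)" using mono j unfolding strict_mono_on_def by auto
  ultimately show "t j < pi/2" by simp
qed

lemma nonneg_of_mult: "0 \<le> a * b \<Longrightarrow> 0 < (b::real) \<Longrightarrow> 0 \<le> a"
  by (simp add: zero_le_mult_iff)

lemma trig_facts:
  fixes p r :: real
  assumes "pi/4 \<le> p" "p < r" "r < pi/2"
  defines "m \<equiv> (p + r)/2" and "h \<equiv> (r - p)/2"
  shows "sin h > 0" "cos m > sin h" "sin m - cos m \<ge> sin h" "cos m > 0"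
    "sin m ^ 2 + cos m ^ 2 = 1" "sin h ^ 2 + cos h ^ 2 = 1" "cos h \<le> 1" "sin m > 1/2"
    "cos p = cos m * cos h + sin m * sin h" "sin p = sin m * cos h - cos m * sin h"
    "cos r = cos m * cos h - sin m * sin h" "sin r = sin m * cos h + cos m * sin h"
proof -
  have pm: "p = m - h" and rm: "r = m + h" unfolding m_def h_def by (simp_all add: field_simps)
  have h0: "0 < h" and hm: "pi/4 + h \<le> m" and mh: "m + h < pi/2"
    using assms unfolding m_def h_def by (simp_all add: field_simps)
  show "sin h > 0" using h0 mh hm by (intro sin_gt_zero) (use pi_gt_zero in linarith)+
  have "sin h < sin (pi/2 - m)"
    using h0 hm mh by (subst sin_mono_less_eq) (use pi_gt_zero in linarith)+
  then show "cos m > sin h" by (simp add: cos_sin_eq)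
  have s1: "sin h \<le> sin (m - pi/4)"
    using h0 hm mh by (subst sin_mono_le_eq) (use pi_gt_zero in linarith)+
  have s2: "sin (m - pi/4) = (sin m - cos m) * (sqrt 2 / 2)"
    by (simp add: sin_diff sin_45 cos_45 algebra_simps)
  have s3: "sin (m - pi/4) \<ge> 0" using hm h0 mh by (intro sin_ge_zero) (use pi_gt_zero in linarith)+
  have c1: "sqrt 2 / 2 \<le> 1" using sqrt2_less_2 by simp
  have c0: "sqrt 2 / 2 > 0" by simp
  have "0 \<le> (sin m - cos m) * (sqrt 2 / 2)" using s2 s3 by simp
  then have "sin m - cos m \<ge> 0" using c0 nonneg_of_mult by blast
  then have "sin m - cos m \<ge> sin (m - pi/4)" unfolding s2 using c1 by (rule mult_left_le[rotated])
  then show "sin m - cos m \<ge> sin h" using s1 by simp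
  show cm: "cos m > 0" using hm mh h0 by (intro cos_gt_zero) (use pi_gt_zero in linarith)+
  show ss: "sin m ^ 2 + cos m ^ 2 = 1" by simp
  show "sin h ^ 2 + cos h ^ 2 = 1" by simp
  show "cos h \<le> 1" by simp
  have "sin m \<ge> cos m" using \<open>sin m - cos m \<ge> sin h\<close> \<open>sin h > 0\<close> by simp
  then have "sin m ^ 2 \<ge> cos m ^ 2" using cm by (intro power_mono) auto
  then have "sin m ^ 2 > 1/4" using ss by linarith
  then show "sin m > 1/2"
  proof (rule contrapos_pp)
    assume "\<not> sin m > 1/2"
    then have "sin m ^ 2 \<le> (1/2)^2" using \<open>sin m \<ge> cos m\<close> cm by (intro power_mono) auto
    then show "\<not> sin m ^ 2 > 1/4" by (simp add: power2_eq_square)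
  qed
  show "cos p = cos m * cos h + sin m * sin h" unfolding pm by (simp add: cos_diff)
  show "sin p = sin m * cos h - cos m * sin h" unfolding pm by (simp add: sin_diff)
  show "cos r = cos m * cos h - sin m * sin h" unfolding rm by (simp add: cos_add)
  show "sin r = sin m * cos h + cos m * sin h" unfolding rm by (simp add: sin_add)
qed

lemma perp2:
  fixes z e :: "real \<times> real" and S Co sh :: real
  assumes "S^2 + Co^2 = 1" "sh \<noteq> 0" "inner z (-(2 * S * sh), 2 * Co * sh) = 0"
  shows "inner z e = inner z (Co, S) * inner (Co, S) e"
proof -
  obtain z1 z2 where z: "z = (z1, z2)" by (cases z)
  obtain e1 e2 where e: "e = (e1, e2)" by (cases e)
  have "sh * (Co * z2 - S * z1) = 0" using assms(3) unfolding z by (simp add: algebra_simps)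
  then have r: "Co * z2 = S * z1" using assms(2) by simp
  have "z1 * e1 + z2 * e2 = (z1 * Co + z2 * S) * (Co * e1 + S * e2)"
    using r assms(1) by algebra
  then show ?thesis unfolding z e by simp
qed

lemma tmono:
  fixes t :: "nat \<Rightarrow> real"
  assumes mono: "strict_mono_on {1..} t" and "1 \<le> i" "i \<le> j"
  shows "t i \<le> t j"
  using assms unfolding strict_mono_on_def by (cases "i = j") (auto intro: less_imp_le)

theorem proposition3:
  fixes t :: "nat \<Rightarrow> real" and k :: nat and c :: "real \<times> real"
  assumes mono: "strict_mono_on {1..} t"
    and t1: "t 1 = pi / 4"
    and lim: "t \<longlonglongrightarrow> pi / 2"
    and k: "k \<ge> 1"
  defines "v \<equiv> (\<lambda>j. (cos (t j), sin (t j)))"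
    and "a \<equiv> ((-2, 2) :: real \<times> real)"
    and "b \<equiv> ((2, 2) :: real \<times> real)"
  assumes c: "c \<in> {(1 - s) *\<^sub>R v k + s *\<^sub>R v (k + 1) | s. 0 \<le> s \<and> s < 1}"
  shows "let C1 = {a}; C2 = {b}; C3 = closure (convex hull {v j | j. j \<ge> 1});
             d = (1 / norm (v (k + 1) - v k)) *\<^sub>R (v (k + 1) - v k);
             eps = 1 + inner (b - c) d / inner (a - c) d
         in inner (a - c) d \<noteq> 0 \<and> 0 < eps \<and> eps < 1 \<and>
            (\<exists>u1 u2 u3. eps_cycle C1 C2 C3 eps u1 u2 u3 \<and>
                        cycle_support C1 C2 C3 u1 u2 u3 = (a, b, c))"
proof -
  have k1: "k + 1 \<ge> 1" by simp
  note tk = t_facts[OF mono t1 lim k] and tk1 = t_facts[OF mono t1 lim k1]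
  have ptr: "t k < t (k+1)" using mono k unfolding strict_mono_on_def by auto
  define m where "m = (t k + t (k+1))/2"
  define h where "h = (t (k+1) - t k)/2"
  define S where "S = sin m"
  define Co where "Co = cos m"
  define sh where "sh = sin h"
  define ch where "ch = cos h"
  note tf = trig_facts[OF tk(1) ptr tk1(2), folded m_def h_def, folded S_def Co_def sh_def ch_def]
  have sh0: "sh > 0" and Cosh: "Co > sh" and SCo: "S - Co \<ge> sh" and Co0: "Co > 0"
    and SC1: "S^2 + Co^2 = 1" and sc1: "sh^2 + ch^2 = 1" and ch1: "ch \<le> 1" and S12: "S > 1/2"
    using tf by auto
  have vk: "v k = (Co * ch + S * sh, S * ch - Co * sh)" unfolding v_def using tf by simp
  have vk1: "v (k+1) = (Co * ch - S * sh, S * ch + Co * sh)" unfolding v_def using tf by simp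
  obtain s where s0: "0 \<le> s" and s1: "s < 1" and cs: "c = (1 - s) *\<^sub>R v k + s *\<^sub>R v (k + 1)"
    using c by blast
  define w where "w = v (k+1) - v k"
  have w: "w = (-(2 * S * sh), 2 * Co * sh)" unfolding w_def vk vk1 by simp
  have nw: "norm w > 0" using w sh0 Co0 by (auto simp: zero_prod_def)
  have cc: "c = (Co * ch + S * sh - 2 * s * S * sh, S * ch - Co * sh + 2 * s * Co * sh)"
    unfolding cs vk vk1 by (simp add: algebra_simps)
  define sg where "sg = (2 * s - 1) * sh"
  define P where "P = 2 * S + 2 * Co - sg"
  define Q where "Q = 2 * Co - 2 * S - sg"
  have Aw: "inner (a - c) w = 2 * sh * P"
    unfolding a_def cc w P_def sg_def using SC1 by simp algebra
  have Bw: "inner (b - c) w = 2 * sh * Q"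
    unfolding b_def cc w Q_def sg_def using SC1 by simp algebra
  have sg1: "- sh \<le> sg" "sg < sh"
    unfolding sg_def using s0 s1 sh0 by (auto simp: algebra_simps mult_le_cancel_right1)
  define d where "d = (1 / norm (v (k + 1) - v k)) *\<^sub>R (v (k + 1) - v k)"
  have d: "d = (1 / norm w) *\<^sub>R w" by (simp add: d_def w_def)
  define eps where "eps = 1 + inner (b - c) d / inner (a - c) d"
  have P0: "P > 0" unfolding P_def using SCo sg1 Co0 S12 by linarith
  have Q0: "Q < 0" unfolding Q_def using SCo sg1 sh0 by linarith
  have PQ: "P + Q > 0" unfolding P_def Q_def using Cosh sg1 by linarith
  have Ad: "inner (a - c) d = 2 * sh * P / norm w" unfolding d using Aw by simp
  have Bd: "inner (b - c) d = 2 * sh * Q / norm w" unfolding d using Bw by simp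
  have Adne: "inner (a - c) d \<noteq> 0" unfolding Ad using sh0 P0 nw by simp
  have epsQ: "eps = 1 + Q / P" unfolding eps_def Ad Bd using sh0 nw by simp
  define q where "q = - Q / P"
  have q0: "0 < q" unfolding q_def using P0 Q0 by (simp add: divide_neg_pos)
  have q1: "q < 1" unfolding q_def using P0 PQ by (simp add: less_divide_eq)
  have epsq: "eps = 1 - q" unfolding epsQ q_def by simp
  have qrel: "q * P + Q = 0" unfolding q_def using P0 by simp
  have eps0: "0 < eps" and eps1: "eps < 1" using q0 q1 epsq by auto
  have q3: "q^3 < 1" using q0 q1 by (simp add: power_less_one_iff)
  define u1 where "u1 = (eps / (1 - q^3)) *\<^sub>R (a + q *\<^sub>R c + q^2 *\<^sub>R b)"
  define u2 where "u2 = q *\<^sub>R u1 + eps *\<^sub>R b"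
  define u3 where "u3 = q *\<^sub>R u2 + eps *\<^sub>R c"
  have lin: "inner u1 g * (1 - q^3) = eps * (inner a g + q * inner c g + q^2 * inner b g)" for g
    unfolding u1_def using q3 by (simp add: inner_add_left)
  have lin2: "inner u2 g = q * inner u1 g + eps * inner b g" for g
    unfolding u2_def by (simp add: inner_add_left)
  have "(inner u2 w - inner c w) * (1 - q^3) = 0"
  proof -
    have r: "q * (inner a w - inner c w) + (inner b w - inner c w) = 0"
    proof -
      have "inner a w - inner c w = 2 * sh * P" using Aw by (simp add: inner_diff_left)
      moreover have "inner b w - inner c w = 2 * sh * Q" using Bw by (simp add: inner_diff_left)
      ultimately show ?thesis using qrel by algebra
    qed
    show ?thesis using lin[of w] lin2[of w] r epsq by algebra
  qed
  then have perp: "inner (u2 - c) w = 0" using q3 by (simp add: inner_diff_left)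
  define n where "n = (Co, S)"
  have Nc: "inner n c = ch" unfolding n_def cc using SC1 by simp algebra
  have Na: "inner n a = 2 * S - 2 * Co" unfolding n_def a_def by simp
  have Nb: "inner n b = 2 * S + 2 * Co" unfolding n_def b_def by simp
  have "(inner u2 n - ch) * (1 - q^3) = (1 - q) * ((inner b n - ch) + q * (inner a n - ch))"
    using lin[of n] lin2[of n] epsq Nc by (simp add: inner_commute) algebra
  moreover have "(inner b n - ch) + q * (inner a n - ch) \<ge> 0"
  proof -
    have "(inner b n - ch) + q * (inner a n - ch) = (1 - q) * (inner b n - ch) + q * (4 * S - 2 * ch)"
      unfolding inner_commute[of a n] inner_commute[of b n] Na Nb by (simp add: algebra_simps)
    moreover have "inner b n - ch \<ge> 0" using Nb ch1 S12 Co0 by (simp add: inner_commute)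
    moreover have "4 * S - 2 * ch \<ge> 0" using ch1 S12 by simp
    ultimately show ?thesis using q0 q1 by simp
  qed
  ultimately have "0 \<le> (inner u2 n - ch) * (1 - q^3)" using q1 by simp
  then have "inner u2 n - ch \<ge> 0" by (rule nonneg_of_mult) (use q3 in simp)
  moreover have "inner (u2 - c) n = inner u2 n - ch" by (simp only: inner_diff_left inner_commute[of c n] Nc)
  ultimately have X0: "inner (u2 - c) n \<ge> 0" by simp
  define C3 where "C3 = closure (convex hull {v j | j. j \<ge> 1})"
  have vj: "inner n (v j) \<le> ch" if j: "j \<ge> 1" for j
  proof -
    have e1: "inner n (v j) = cos (t j - m)" unfolding n_def v_def S_def Co_def
      by (simp add: cos_diff algebra_simps)
    note tj = t_facts[OF mono t1 lim j]
    have mh: "m = t k + h" "m + h = t (k+1)" unfolding m_def h_def by (simp_all add: field_simps)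
    have h0: "0 < h" unfolding h_def using ptr by simp
    show ?thesis
    proof (cases "j \<le> k")
      case True
      then have "t j \<le> t k" using tmono[OF mono j] by simp
      have "cos (m - t j) \<le> cos h"
        using \<open>t j \<le> t k\<close> tj h0 mh tk tk1 by (subst cos_mono_le_eq) (use pi_gt_zero in linarith)+
      moreover have "cos (t j - m) = cos (m - t j)" by (metis cos_minus minus_diff_eq)
      ultimately show ?thesis unfolding e1 ch_def by simp
    next
      case False
      then have "t (k+1) \<le> t j" using tmono[OF mono k1, of j] by simp
      have "cos (t j - m) \<le> cos h"
        using \<open>t (k+1) \<le> t j\<close> tj h0 mh tk tk1 by (subst cos_mono_le_eq) (use pi_gt_zero in linarith)+
      then show ?thesis unfolding e1 ch_def by simp
    qed
  qed
  have Hsub: "{v j | j. j \<ge> 1} \<subseteq> {y. inner n y \<le> ch}" using vj by blast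
  have C3H: "C3 \<subseteq> {y. inner n y \<le> ch}" unfolding C3_def
    by (rule closure_minimal[OF hull_minimal[where S=convex, OF Hsub convex_halfspace_le[of n ch]] closed_halfspace_le[of n ch]])
  have "v k \<in> convex hull {v j | j. j \<ge> 1}" "v (k+1) \<in> convex hull {v j | j. j \<ge> 1}"
    using k by (auto intro!: hull_inc)
  then have "c \<in> convex hull {v j | j. j \<ge> 1}" unfolding cs
    using s0 s1 by (intro convexD_alt) auto
  then have cC3: "c \<in> C3" unfolding C3_def using closure_subset by blast
  have cp3: "closest_point C3 u2 = c"
  proof (rule cp_char)
    show "convex C3" unfolding C3_def by simp
    show "closed C3" unfolding C3_def by simp
    show "c \<in> C3" by (rule cC3)
    show "\<forall>y\<in>C3. inner (u2 - c) (y - c) \<le> 0"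
    proof
      fix y assume y: "y \<in> C3"
      have "inner (u2 - c) (y - c) = inner (u2 - c) n * inner n (y - c)"
        using perp2[OF SC1, of sh "u2 - c" "y - c"] perp sh0 unfolding w n_def by simp
      moreover have "inner n (y - c) \<le> 0" using C3H y Nc by (auto simp: inner_diff_right)
      ultimately show "inner (u2 - c) (y - c) \<le> 0" using X0 by (simp add: mult_nonneg_nonpos)
    qed
  qed
  have cpa: "closest_point {a} x = a" for x using closest_point_in_set[of "{a}" x] by simp
  have cpb: "closest_point {b} x = b" for x using closest_point_in_set[of "{b}" x] by simp
  have U1: "(1 - q^3) *\<^sub>R u1 = eps *\<^sub>R (a + q *\<^sub>R c + q^2 *\<^sub>R b)" unfolding u1_def using q3 by simp
  have "u3 + eps *\<^sub>R (a - u3) = q^3 *\<^sub>R u1 + eps *\<^sub>R (a + q *\<^sub>R c + q^2 *\<^sub>R b)"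
    unfolding u3_def u2_def epsq by (simp add: algebra_simps power3_eq_cube power2_eq_square)
  also have "\<dots> = u1" unfolding U1[symmetric] by (simp add: algebra_simps)
  finally have e1: "u1 = u3 + eps *\<^sub>R (closest_point {a} u3 - u3)" unfolding cpa by simp
  have e2: "u2 = u1 + eps *\<^sub>R (closest_point {b} u1 - u1)" unfolding cpb u2_def epsq
    by (simp add: algebra_simps)
  have e3: "u3 = u2 + eps *\<^sub>R (closest_point C3 u2 - u2)" unfolding cp3 u3_def epsq
    by (simp add: algebra_simps)
  have cyc: "eps_cycle {a} {b} C3 eps u1 u2 u3"
    unfolding eps_cycle_def using eps0 eps1 e1 e2 e3 by simp
  have sup: "cycle_support {a} {b} C3 u1 u2 u3 = (a, b, c)"
    unfolding cycle_support_def cpa cpb cp3 by simp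
  have final: "inner (a - c) d \<noteq> 0 \<and> 0 < eps \<and> eps < 1 \<and>
      (\<exists>u1 u2 u3. eps_cycle {a} {b} C3 eps u1 u2 u3 \<and> cycle_support {a} {b} C3 u1 u2 u3 = (a, b, c))"
    using Adne eps0 eps1 cyc sup by blast
  show ?thesis unfolding Let_def d_def[symmetric] C3_def[symmetric] eps_def[symmetric]
    by (rule final)
qed

end
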